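(* Let $\alpha,\beta$ be fixed nonzero real numbers. There exist constants $C,N>0$, independent of $n$, $\epsilon$ and the point set, such that the following holds: for every $n>N$, every $\epsilon>0$, and every set $P\subset[0,1]^2$ of $n$ points satisfying the separation condition $$\min\{|p-q|:\ p,q\in P,\ p\neq q\}\ge \epsilon,$$ we have $$|\Pi_{\alpha,\beta}(P)|\le C\, n^{4/3}\,\epsilon^{-1}\log(\epsilon^{-1}).$$
   Context: For a finite set $P\subset\mathbb R^2$ and real numbers $\alpha,\beta$, define the set of ordered triples $$\Pi_{\alpha,\beta}(P)=\{(p,q,r)\in P\times P\times P:\ p\cdot q=\alpha \text{ and } p\cdot r=\beta\},$$ where $\cdot$ is the standard dot product on $\mathbb R^2$ (the points $p,q,r$ need not be distinct). Here $|p-q|$ is the Euclidean distance. *)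

theory Defs
  imports "HOL-Analysis.Analysis"
begin

definition Pi_ab :: "real \<Rightarrow> real \<Rightarrow> (real^2) set \<Rightarrow> ((real^2) \<times> (real^2) \<times> (real^2)) set" where
  "Pi_ab \<alpha> \<beta> P = {(p, q, r). p \<in> P \<and> q \<in> P \<and> r \<in> P \<and> p \<bullet> q = \<alpha> \<and> p \<bullet> r = \<beta>}"

definition unit_square :: "(real^2) set" where
  "unit_square = {x. \<forall>i. 0 \<le> x $ i \<and> x $ i \<le> 1}"

end

theory Submission
  imports Defs
begin

lemma inner2: "(x::real^2) \<bullet> y = x$1*y$1 + x$2*y$2"
  by (simp add: inner_vec_def sum_2)

lemma dist2: "(dist (x::real^2) y)^2 = (x$1-y$1)^2 + (x$2-y$2)^2"
proof -
  have "(norm (x-y))^2 = (x-y) \<bullet> (x-y)" by (rule power2_norm_eq_inner)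
  thus ?thesis by (simp add: dist_norm inner2 power2_eq_square)
qed

lemma norm2: "(norm (x::real^2))^2 = (x$1)^2 + (x$2)^2"
proof -
  have "(norm x)^2 = x \<bullet> x" by (rule power2_norm_eq_inner)
  thus ?thesis by (simp add: inner2 power2_eq_square)
qed

lemma vec2_eq: "(x::real^2) = y \<longleftrightarrow> x$1 = y$1 \<and> x$2 = y$2"
  by (simp add: vec_eq_iff forall_2)

lemma tangent:
  fixes d g :: real assumes "d > 0" "g > 0"
  shows "3/g^2 - 2*d/g^3 \<le> 1/d^2"
proof -
  have e: "g^3 - (3*d^2*g - 2*d^3) = (g-d)^2*(g+2*d)" by (simp add: algebra_simps power2_eq_square power3_eq_cube)
  have "(g-d)^2*(g+2*d) \<ge> 0" using assms by simp
  hence le: "3*d^2*g - 2*d^3 \<le> g^3" using e by linarith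
  have "3/g^2 - 2*d/g^3 = (3*d^2*g - 2*d^3)/(d^2*g^3)" using assms
    by (simp add: field_simps power2_eq_square power3_eq_cube)
  also have "\<dots> \<le> g^3/(d^2*g^3)" by (intro divide_right_mono) (use le assms in auto)
  also have "\<dots> = 1/d^2" using assms by simp
  finally show ?thesis .
qed

lemma gap_aux:
  fixes f :: "'a \<Rightarrow> real"
  shows "finite A \<Longrightarrow> card A = Suc n \<Longrightarrow> inj_on f A \<Longrightarrow> g0 > 0 \<Longrightarrow> (\<forall>x\<in>A. lo \<le> f x) \<Longrightarrow>
    \<exists>E \<subseteq> {(x,y). x\<in>A \<and> y\<in>A \<and> x \<noteq> y}.
      3*real n/g0^2 - 2*(Max (f`A) - lo)/g0^3 \<le> (\<Sum>(x,y)\<in>E. 1/(f x - f y)^2)"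
proof (induction n arbitrary: A)
  case 0
  then obtain a where A: "A = {a}" by (auto simp: card_Suc_eq)
  have "0 \<le> 2*(f a - lo)/g0^3" using 0 A by simp
  thus ?case using A by (intro exI[of _ "{}"]) auto
next
  case (Suc n)
  have ne: "A \<noteq> {}" using Suc.prems by auto
  have fin: "finite (f`A)" using Suc.prems by simp
  have "Max (f`A) \<in> f`A" using Max_in[OF fin] ne by auto
  then obtain z where z: "z \<in> A" "f z = Max (f`A)" by auto
  define A' where "A' = A - {z}"
  have cA': "card A' = Suc n" using Suc.prems z by (simp add: A'_def)
  have fA': "finite A'" using Suc.prems by (simp add: A'_def)
  have ne': "A' \<noteq> {}" using cA' by auto
  have inj': "inj_on f A'" using Suc.prems by (auto simp: A'_def intro: inj_on_subset)
  obtain E' where E': "E' \<subseteq> {(x,y). x\<in>A' \<and> y\<in>A' \<and> x \<noteq> y}"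
    "3*real n/g0^2 - 2*(Max (f`A') - lo)/g0^3 \<le> (\<Sum>(x,y)\<in>E'. 1/(f x - f y)^2)"
    using Suc.IH[OF fA' cA' inj' Suc.prems(4)] Suc.prems(5) by (auto simp: A'_def)
  have "Max (f`A') \<in> f`A'" using Max_in[of "f`A'"] fA' ne' by auto
  then obtain w where w: "w \<in> A'" "f w = Max (f`A')" by auto
  have wz: "w \<noteq> z" "w \<in> A" using w by (auto simp: A'_def)
  have "f w \<le> f z" using z wz fin by simp
  moreover have "f w \<noteq> f z" using Suc.prems(3) wz z inj_onD by metis
  ultimately have d: "f z - f w > 0" by simp
  have nin: "(z,w) \<notin> E'" using E' by (auto simp: A'_def)
  have finE': "finite E'"
  proof (rule finite_subset[OF E'(1)])
    show "finite {(x,y). x\<in>A' \<and> y\<in>A' \<and> x \<noteq> y}"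
      by (rule finite_subset[of _ "A' \<times> A'"]) (use fA' in auto)
  qed
  have sumE: "(\<Sum>(x,y)\<in>insert (z,w) E'. 1/(f x - f y)^2) = 1/(f z - f w)^2 + (\<Sum>(x,y)\<in>E'. 1/(f x - f y)^2)"
    using finE' nin by simp
  have t: "3/g0^2 - 2*(f z - f w)/g0^3 \<le> 1/(f z - f w)^2" using tangent d Suc.prems(4) by blast
  have "3*real (Suc n)/g0^2 - 2*(Max (f`A) - lo)/g0^3 =
     (3*real n/g0^2 - 2*(Max (f`A') - lo)/g0^3) + (3/g0^2 - 2*(f z - f w)/g0^3)"
    using z w Suc.prems(4) by (simp add: field_simps)
  also have "\<dots> \<le> (\<Sum>(x,y)\<in>insert (z,w) E'. 1/(f x - f y)^2)" using sumE t E'(2) by linarith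
  finally show ?case using E'(1) z wz by (intro exI[of _ "insert (z,w) E'"]) (auto simp: A'_def)
qed

lemma gap_cor:
  fixes f :: "'a \<Rightarrow> real"
  assumes "finite A" "card A \<ge> 2" "inj_on f A" "L > 0" "\<forall>x\<in>A. \<forall>y\<in>A. \<bar>f x - f y\<bar> \<le> L"
  shows "\<exists>E \<subseteq> {(x,y). x\<in>A \<and> y\<in>A \<and> x \<noteq> y}.
      (real (card A) - 1)^3/L^2 \<le> (\<Sum>(x,y)\<in>E. 1/(f x - f y)^2)"
proof -
  obtain n where n: "card A = Suc n" "n \<ge> 1" using assms(2) by (cases "card A") auto
  have ne: "A \<noteq> {}" using n by auto
  have fin: "finite (f`A)" using assms by simp
  define lo where "lo = Min (f`A)"
  define g0 where "g0 = L / real n"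
  have g0: "g0 > 0" using n assms by (simp add: g0_def)
  have lo: "\<forall>x\<in>A. lo \<le> f x" using fin by (simp add: lo_def)
  obtain E where E: "E \<subseteq> {(x,y). x\<in>A \<and> y\<in>A \<and> x \<noteq> y}"
    "3*real n/g0^2 - 2*(Max (f`A) - lo)/g0^3 \<le> (\<Sum>(x,y)\<in>E. 1/(f x - f y)^2)"
    using gap_aux[OF assms(1) n(1) assms(3) g0 lo] by blast
  have "Max (f`A) \<in> f`A" "lo \<in> f`A" using Max_in Min_in fin ne by (auto simp: lo_def)
  then obtain a b where ab: "a \<in> A" "b \<in> A" "Max (f`A) = f a" "lo = f b" by auto
  have span: "Max (f`A) - lo \<le> L" using assms(5) ab by fastforce
  have "2*(Max (f`A) - lo)/g0^3 \<le> 2*L/g0^3" using span g0 by (simp add: divide_right_mono)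
  hence "3*real n/g0^2 - 2*L/g0^3 \<le> (\<Sum>(x,y)\<in>E. 1/(f x - f y)^2)" using E(2) by linarith
  moreover have "3*real n/g0^2 - 2*L/g0^3 = (real n)^3/L^2"
    using n assms(4) by (simp add: g0_def field_simps power2_eq_square power3_eq_cube)
  moreover have "real (card A) - 1 = real n" using n by simp
  ultimately show ?thesis using E(1) by auto
qed

lemma line_bound:
  fixes P :: "(real^2) set" and p :: "real^2"
  assumes "finite P" "P \<subseteq> unit_square" "\<alpha> \<noteq> 0"
    and A: "A = {q\<in>P. p \<bullet> q = \<alpha>}" and c: "card A \<ge> 2"
  shows "\<exists>E \<subseteq> {(x,y). x\<in>A \<and> y\<in>A \<and> x \<noteq> y}.
      (real (card A) - 1)^3/2 \<le> (\<Sum>(x,y)\<in>E. 1/(dist x y)^2)"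
proof -
  have "A \<noteq> {}" using c by auto
  then obtain q0 where "q0 \<in> A" by auto
  hence "p \<bullet> q0 = \<alpha>" using A by auto
  hence "p \<noteq> 0" using assms(3) by auto
  hence np: "norm p > 0" by simp
  define f where "f x = (x$1*p$2 - x$2*p$1)/norm p" for x :: "real^2"
  have key: "(f x - f y)^2 = (dist x y)^2" if "x \<in> A" "y \<in> A" for x y
  proof -
    define u1 where "u1 = x$1 - y$1"
    define u2 where "u2 = x$2 - y$2"
    have h: "u1*p$1 + u2*p$2 = 0" using that A
      by (simp add: u1_def u2_def inner2 algebra_simps)
    have "(u1*p$2 - u2*p$1)^2 = (u1^2+u2^2)*((p$1)^2+(p$2)^2) - (u1*p$1 + u2*p$2)^2"
      by (simp add: power2_eq_square algebra_simps)
    also have "\<dots> = (u1^2+u2^2)*(norm p)^2" using h by (simp add: norm2)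
    finally have e: "(u1*p$2 - u2*p$1)^2 = (u1^2+u2^2)*(norm p)^2" .
    have "f x - f y = ((x$1*p$2 - x$2*p$1) - (y$1*p$2 - y$2*p$1))/norm p" by (simp add: f_def diff_divide_distrib)
    also have "(x$1*p$2 - x$2*p$1) - (y$1*p$2 - y$2*p$1) = u1*p$2 - u2*p$1" by (simp add: u1_def u2_def algebra_simps)
    finally have "f x - f y = (u1*p$2 - u2*p$1)/norm p" .
    hence "(f x - f y)^2 = (u1*p$2 - u2*p$1)^2/(norm p)^2" by (simp add: power_divide)
    also have "\<dots> = u1^2+u2^2" using e np by simp
    finally show ?thesis by (simp add: dist2 u1_def u2_def)
  qed
  have keyabs: "\<bar>f x - f y\<bar> = dist x y" if "x \<in> A" "y \<in> A" for x y
  proof -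
    have "\<bar>f x - f y\<bar> = sqrt ((f x - f y)^2)" by simp
    also have "\<dots> = sqrt ((dist x y)^2)" using key[OF that] by simp
    also have "\<dots> = dist x y" by simp
    finally show ?thesis .
  qed
  have inj: "inj_on f A"
  proof (rule inj_onI)
    fix x y assume "x \<in> A" "y \<in> A" "f x = f y"
    thus "x = y" using keyabs by fastforce
  qed
  have bnd: "\<forall>x\<in>A. \<forall>y\<in>A. \<bar>f x - f y\<bar> \<le> sqrt 2"
  proof (intro ballI)
    fix x y assume xy: "x \<in> A" "y \<in> A"
    hence "x \<in> unit_square" "y \<in> unit_square" using A assms(2) by auto
    hence "\<forall>i. 0 \<le> x$i \<and> x$i \<le> 1 \<and> 0 \<le> y$i \<and> y$i \<le> 1" by (auto simp: unit_square_def)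
    hence "\<bar>x$1-y$1\<bar> \<le> 1" "\<bar>x$2-y$2\<bar> \<le> 1" by (smt (verit))+
    hence "(x$1-y$1)^2 \<le> 1" "(x$2-y$2)^2 \<le> 1" by (simp_all only: abs_square_le_1)
    hence "(dist x y)^2 \<le> 2" by (simp add: dist2)
    hence "dist x y \<le> sqrt 2" by (rule real_le_rsqrt)
    thus "\<bar>f x - f y\<bar> \<le> sqrt 2" using keyabs xy by simp
  qed
  obtain E where E: "E \<subseteq> {(x,y). x\<in>A \<and> y\<in>A \<and> x \<noteq> y}"
    "(real (card A) - 1)^3/(sqrt 2)^2 \<le> (\<Sum>(x,y)\<in>E. 1/(f x - f y)^2)"
    using gap_cor[OF _ c inj _ bnd] assms(1) A by auto
  have "(\<Sum>(x,y)\<in>E. 1/(f x - f y)^2) = (\<Sum>(x,y)\<in>E. 1/(dist x y)^2)"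
    using E(1) key by (intro sum.cong) auto
  thus ?thesis using E by auto
qed

lemma unique_line:
  fixes p p' x y :: "real^2"
  assumes "\<alpha> \<noteq> 0" "p \<bullet> x = \<alpha>" "p \<bullet> y = \<alpha>" "p' \<bullet> x = \<alpha>" "p' \<bullet> y = \<alpha>" "x \<noteq> y"
  shows "p = p'"
proof (rule ccontr)
  assume pp: "p \<noteq> p'"
  define u1 where "u1 = p$1 - p'$1"
  define u2 where "u2 = p$2 - p'$2"
  have u: "u1 \<noteq> 0 \<or> u2 \<noteq> 0" using pp by (auto simp: vec2_eq u1_def u2_def)
  have h1: "u1*x$1 + u2*x$2 = 0" using assms by (simp add: inner2 u1_def u2_def algebra_simps)
  have h2: "u1*y$1 + u2*y$2 = 0" using assms by (simp add: inner2 u1_def u2_def algebra_simps)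
  have "u1*(x$1*y$2 - x$2*y$1) = (u1*x$1 + u2*x$2)*y$2 - (u1*y$1 + u2*y$2)*x$2"
    by (simp add: algebra_simps)
  hence a: "u1*(x$1*y$2 - x$2*y$1) = 0" using h1 h2 by simp
  have "u2*(x$1*y$2 - x$2*y$1) = (u1*y$1 + u2*y$2)*x$1 - (u1*x$1 + u2*x$2)*y$1"
    by (simp add: algebra_simps)
  hence b: "u2*(x$1*y$2 - x$2*y$1) = 0" using h1 h2 by simp
  have cr: "x$1*y$2 - x$2*y$1 = 0" using a b u by auto
  have "(p$1*x$1+p$2*x$2)*y$1 - (p$1*y$1+p$2*y$2)*x$1 = -(p$2)*(x$1*y$2 - x$2*y$1)"
    by (simp add: algebra_simps)
  hence "\<alpha>*y$1 - \<alpha>*x$1 = 0" using assms(2,3) cr by (simp add: inner2)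
  hence e1: "y$1 = x$1" using assms(1) by (simp add: right_diff_distrib[symmetric])
  have "(p$1*x$1+p$2*x$2)*y$2 - (p$1*y$1+p$2*y$2)*x$2 = (p$1)*(x$1*y$2 - x$2*y$1)"
    by (simp add: algebra_simps)
  hence "\<alpha>*y$2 - \<alpha>*x$2 = 0" using assms(2,3) cr by (simp add: inner2)
  hence e2: "y$2 = x$2" using assms(1) by (simp add: right_diff_distrib[symmetric])
  show False using e1 e2 assms(6) by (simp add: vec2_eq)
qed

lemma sum_cubes:
  fixes P :: "(real^2) set"
  assumes fin: "finite P" and sq: "P \<subseteq> unit_square" and al: "\<alpha> \<noteq> 0"
  shows "(\<Sum>p\<in>P. real (card {q\<in>P. p \<bullet> q = \<alpha>})^3)
     \<le> real (card P) + 16*(\<Sum>(x,y)\<in>{(x,y). x\<in>P \<and> y\<in>P \<and> x\<noteq>y}. 1/(dist x y)^2)"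
proof -
  define A where "A p = {q\<in>P. p \<bullet> q = \<alpha>}" for p
  define Off where "Off = {(x,y). x\<in>P \<and> y\<in>P \<and> x\<noteq>y}"
  have finOff: "finite Off"
    by (rule finite_subset[of _ "P \<times> P"]) (use fin in \<open>auto simp: Off_def\<close>)
  have "\<forall>p\<in>P. \<exists>E. E \<subseteq> {(x,y). x\<in>A p \<and> y\<in>A p \<and> x\<noteq>y} \<and>
          real (card (A p))^3 \<le> 1 + 16*(\<Sum>(x,y)\<in>E. 1/(dist x y)^2)"
  proof
    fix p assume "p \<in> P"
    show "\<exists>E. E \<subseteq> {(x,y). x\<in>A p \<and> y\<in>A p \<and> x\<noteq>y} \<and>
          real (card (A p))^3 \<le> 1 + 16*(\<Sum>(x,y)\<in>E. 1/(dist x y)^2)"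
    proof (cases "card (A p) \<ge> 2")
      case True
      obtain E where E: "E \<subseteq> {(x,y). x\<in>A p \<and> y\<in>A p \<and> x\<noteq>y}"
        "(real (card (A p)) - 1)^3/2 \<le> (\<Sum>(x,y)\<in>E. 1/(dist x y)^2)"
        using line_bound[OF fin sq al A_def True] by blast
      have k: "real (card (A p)) \<le> 2*(real (card (A p)) - 1)" "0 \<le> real (card (A p))"
        using True by auto
      have "real (card (A p))^3 \<le> (2*(real (card (A p)) - 1))^3"
        by (rule power_mono[OF k])
      also have "\<dots> = 16*((real (card (A p)) - 1)^3/2)" by (subst power_mult_distrib) simp
      also have "\<dots> \<le> 16*(\<Sum>(x,y)\<in>E. 1/(dist x y)^2)" using E(2) by simp
      finally show ?thesis using E(1) by (intro exI[of _ E]) auto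
    next
      case False
      hence "real (card (A p)) \<le> 1" by simp
      hence "real (card (A p))^3 \<le> 1" by (simp add: power_le_one)
      thus ?thesis by (intro exI[of _ "{}"]) auto
    qed
  qed
  hence "\<exists>E. \<forall>p\<in>P. E p \<subseteq> {(x,y). x\<in>A p \<and> y\<in>A p \<and> x\<noteq>y} \<and>
          real (card (A p))^3 \<le> 1 + 16*(\<Sum>(x,y)\<in>E p. 1/(dist x y)^2)" by (rule bchoice)
  then obtain E where E: "\<forall>p\<in>P. E p \<subseteq> {(x,y). x\<in>A p \<and> y\<in>A p \<and> x\<noteq>y} \<and>
          real (card (A p))^3 \<le> 1 + 16*(\<Sum>(x,y)\<in>E p. 1/(dist x y)^2)"
    by blast
  have sub: "E p \<subseteq> Off" if "p \<in> P" for p using E that by (auto simp: A_def Off_def)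
  have finE: "\<forall>p\<in>P. finite (E p)" using sub finOff finite_subset by blast
  have disj: "\<forall>i\<in>P. \<forall>j\<in>P. i \<noteq> j \<longrightarrow> E i \<inter> E j = {}"
  proof (intro ballI impI)
    fix i j assume ij: "i \<in> P" "j \<in> P" "i \<noteq> j"
    show "E i \<inter> E j = {}"
    proof (rule ccontr)
      assume "E i \<inter> E j \<noteq> {}"
      then obtain x y where "(x,y) \<in> E i" "(x,y) \<in> E j" by auto
      hence h: "i \<bullet> x = \<alpha>" "i \<bullet> y = \<alpha>" "j \<bullet> x = \<alpha>" "j \<bullet> y = \<alpha>" "x \<noteq> y"
        using E ij by (auto simp: A_def)
      have "i = j" by (rule unique_line[OF al h])
      thus False using ij by simp
    qed
  qed
  have "(\<Sum>p\<in>P. real (card (A p))^3) \<le> (\<Sum>p\<in>P. 1 + 16*(\<Sum>(x,y)\<in>E p. 1/(dist x y)^2))"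
    using E by (intro sum_mono) auto
  also have "\<dots> = real (card P) + 16*(\<Sum>p\<in>P. (\<Sum>(x,y)\<in>E p. 1/(dist x y)^2))"
    by (simp add: sum.distrib sum_distrib_left)
  also have "(\<Sum>p\<in>P. (\<Sum>(x,y)\<in>E p. 1/(dist x y)^2)) = (\<Sum>(x,y)\<in>(\<Union>(E ` P)). 1/(dist x y)^2)"
    by (rule sum.UNION_disjoint[OF fin finE disj, symmetric])
  also have "\<dots> \<le> (\<Sum>(x,y)\<in>Off. 1/(dist x y)^2)"
    using sub finOff by (intro sum_mono2) auto
  finally show ?thesis by (simp add: A_def Off_def)
qed

lemma harm_int:
  "(\<Sum>a\<in>{-int H..int H}. 1/(real_of_int \<bar>a\<bar> + 1)) \<le> 1 + 2*ln (real H + 1)"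
proof (induction H)
  case 0
  then show ?case by simp
next
  case (Suc H)
  define S where "S = (\<Sum>a\<in>{-int H..int H}. 1/(real_of_int \<bar>a\<bar> + 1))"
  have set: "{-int (Suc H)..int (Suc H)} = insert (-int (Suc H)) (insert (int (Suc H)) {-int H..int H})"
    by auto
  have n1: "-int (Suc H) \<notin> insert (int (Suc H)) {-int H..int H}" by simp
  have n2: "int (Suc H) \<notin> {-int H..int H}" by simp
  have v1: "1/(real_of_int \<bar>-int (Suc H)\<bar> + 1) = 1/(real H + 2)" by simp
  have v2: "1/(real_of_int \<bar>int (Suc H)\<bar> + 1) = 1/(real H + 2)" by simp
  have "(\<Sum>a\<in>{-int (Suc H)..int (Suc H)}. 1/(real_of_int \<bar>a\<bar> + 1))
      = 1/(real H + 2) + (1/(real H + 2) + S)"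
    unfolding set S_def sum.insert[OF finite.insertI[OF finite_atLeastAtMost_int] n1]
       sum.insert[OF finite_atLeastAtMost_int n2] v1 v2 ..
  moreover have "S \<le> 1 + 2*ln (real H + 1)" using Suc by (simp add: S_def)
  moreover have "1/(real H + 2) \<le> ln (real H + 2) - ln (real H + 1)"
  proof -
    have "ln ((real H + 1)/(real H + 2)) \<le> (real H + 1)/(real H + 2) - 1"
      by (rule ln_le_minus_one) simp
    also have "\<dots> = -(1/(real H + 2))" by (simp add: field_simps)
    finally show ?thesis by (simp add: ln_div)
  qed
  moreover have "ln (real (Suc H) + 1) = ln (real H + 2)" by (simp add: add.assoc)
  ultimately show ?case by linarith
qed

definition cell :: "real \<Rightarrow> real^2 \<Rightarrow> int \<times> int" where
  "cell t y = (\<lfloor>2*t*y$1\<rfloor>, \<lfloor>2*t*y$2\<rfloor>)"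

lemma floor_diff_bound: "\<bar>real_of_int (\<lfloor>a\<rfloor> - \<lfloor>b\<rfloor>)\<bar> < \<bar>a - b\<bar> + 1"
proof -
  have "a - 1 < real_of_int \<lfloor>a\<rfloor>" "real_of_int \<lfloor>a\<rfloor> \<le> a"
       "b - 1 < real_of_int \<lfloor>b\<rfloor>" "real_of_int \<lfloor>b\<rfloor> \<le> b"
    by linarith+
  thus ?thesis by (simp add: abs_less_iff abs_le_iff) linarith
qed

lemma comp_le_dist: "\<bar>x$i - y$i\<bar> \<le> dist (x::real^2) y"
  using component_le_norm_cart[of "x - y" i] by (simp add: dist_norm)

lemma cell_range:
  assumes "t > 0" "y \<in> unit_square"
  shows "cell t y \<in> {0..\<lfloor>2*t\<rfloor>} \<times> {0..\<lfloor>2*t\<rfloor>}"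
proof -
  have b: "0 \<le> y$i" "y$i \<le> 1" for i using assms(2) by (auto simp: unit_square_def)
  have "0 \<le> 2*t*y$i" "2*t*y$i \<le> 2*t" for i
    using b[of i] assms(1) by (simp_all add: mult_left_le)
  hence "0 \<le> \<lfloor>2*t*y$i\<rfloor>" "\<lfloor>2*t*y$i\<rfloor> \<le> \<lfloor>2*t\<rfloor>" for i
    by (simp_all add: floor_mono)
  thus ?thesis by (simp add: cell_def)
qed

lemma cell_inj:
  assumes "t > 0" "\<forall>p\<in>P. \<forall>q\<in>P. p \<noteq> q \<longrightarrow> dist p q \<ge> 1/t"
  shows "inj_on (cell t) P"
proof (rule inj_onI)
  fix x y assume xy: "x \<in> P" "y \<in> P" "cell t x = cell t y"
  show "x = y"
  proof (rule ccontr)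
    assume ne: "x \<noteq> y"
    have "\<bar>2*t*x$i - 2*t*y$i\<bar> < 1" if "i = 1 \<or> i = 2" for i
    proof -
      have "\<lfloor>2*t*x$i\<rfloor> = \<lfloor>2*t*y$i\<rfloor>" using xy(3) that by (auto simp: cell_def)
      thus ?thesis using floor_diff_bound[of "2*t*x$i" "2*t*y$i"] by linarith
    qed
    hence "2*t*\<bar>x$i - y$i\<bar> < 1" if "i = 1 \<or> i = 2" for i
      using that assms(1) by (simp add: abs_mult right_diff_distrib[symmetric])
    hence "\<bar>x$i - y$i\<bar> < 1/(2*t)" if "i = 1 \<or> i = 2" for i
      using that assms(1) by (simp add: field_simps)
    hence sq: "(x$i - y$i)^2 < (1/(2*t))^2" if "i = 1 \<or> i = 2" for i
    proof -
      have "\<bar>x$i - y$i\<bar>^2 < (1/(2*t))^2"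
        by (rule power_strict_mono) (use that \<open>\<And>i. i = 1 \<or> i = 2 \<Longrightarrow> \<bar>x$i - y$i\<bar> < 1/(2*t)\<close> in auto)
      thus ?thesis by simp
    qed
    have "(dist x y)^2 < 2*(1/(2*t))^2" using sq[of 1] sq[of 2] by (simp add: dist2)
    also have "\<dots> < (1/t)^2" using assms(1) by (simp add: power_divide field_simps)
    also have "(1/t)^2 \<le> (dist x y)^2"
      using assms(2) xy ne assms(1) by (intro power_mono) auto
    finally show False by simp
  qed
qed

lemma card_bound:
  assumes "t > 0" "finite P" "P \<subseteq> unit_square" "\<forall>p\<in>P. \<forall>q\<in>P. p \<noteq> q \<longrightarrow> dist p q \<ge> 1/t"
  shows "real (card P) \<le> (2*t+1)^2"
proof -
  have "card P = card (cell t ` P)" using cell_inj[OF assms(1,4)] by (simp add: card_image)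
  also have "\<dots> \<le> card ({0..\<lfloor>2*t\<rfloor>} \<times> {0..\<lfloor>2*t\<rfloor>})"
  proof (rule card_mono)
    show "cell t ` P \<subseteq> {0..\<lfloor>2*t\<rfloor>} \<times> {0..\<lfloor>2*t\<rfloor>}"
      using cell_range[OF assms(1)] assms(3) by blast
  qed simp
  finally have c: "real (card P) \<le> real (card ({0..\<lfloor>2*t\<rfloor>} \<times> {0..\<lfloor>2*t\<rfloor>}))" by linarith
  have h: "0 \<le> \<lfloor>2*t\<rfloor>" using assms(1) by simp
  have "real (card ({0..\<lfloor>2*t\<rfloor>} \<times> {0..\<lfloor>2*t\<rfloor>})) = (real_of_int \<lfloor>2*t\<rfloor> + 1)^2"
    using h by (simp add: card_cartesian_product power2_eq_square)
  also have "\<dots> \<le> (2*t+1)^2" using h by (intro power_mono) auto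
  finally show ?thesis using c by linarith
qed

lemma per_x:
  assumes t: "t > 0" and fin: "finite P" and sq: "P \<subseteq> unit_square"
    and sep: "\<forall>p\<in>P. \<forall>q\<in>P. p \<noteq> q \<longrightarrow> dist p q \<ge> 1/t" and x: "x \<in> P"
  shows "(\<Sum>y\<in>P-{x}. 1/(dist x y)^2)
      \<le> 16*t^2*(\<Sum>a\<in>{-\<lfloor>2*t\<rfloor>..\<lfloor>2*t\<rfloor>}. 1/(real_of_int \<bar>a\<bar> + 1))^2"
proof -
  define H where "H = \<lfloor>2*t\<rfloor>"
  define c where "c y = (fst (cell t y) - fst (cell t x), snd (cell t y) - snd (cell t x))" for y
  define w where "w v = 1/((real_of_int \<bar>fst v\<bar> + 1)*(real_of_int \<bar>snd v\<bar> + 1))" for v :: "int\<times>int"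
  have injc: "inj_on c (P - {x})"
  proof (rule inj_onI)
    fix y z assume "y \<in> P - {x}" "z \<in> P - {x}" "c y = c z"
    hence "cell t y = cell t z" "y \<in> P" "z \<in> P" by (auto simp: c_def prod_eq_iff)
    thus "y = z" using cell_inj[OF t sep] by (auto dest: inj_onD)
  qed
  have box: "c ` (P - {x}) \<subseteq> {-H..H} \<times> {-H..H}"
  proof
    fix v assume "v \<in> c ` (P - {x})"
    then obtain y where y: "y \<in> P" "v = c y" by auto
    have "cell t y \<in> {0..H} \<times> {0..H}" "cell t x \<in> {0..H} \<times> {0..H}"
      using cell_range[OF t] sq y x by (auto simp: H_def)
    thus "v \<in> {-H..H} \<times> {-H..H}" using y by (auto simp: c_def mem_Times_iff)
  qed
  have pt: "1/(dist x y)^2 \<le> 16*t^2 * w (c y)" if y: "y \<in> P - {x}" for y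
  proof -
    define d where "d = dist x y"
    have d1: "1/t \<le> d" using sep x y by (auto simp: d_def dist_commute)
    hence dpos: "d > 0" using t by (smt (verit) divide_pos_pos)
    have td: "1 \<le> t*d" using d1 t by (simp add: field_simps)
    have comp: "real_of_int \<bar>fst (c y)\<bar> + 1 \<le> 4*t*d" "real_of_int \<bar>snd (c y)\<bar> + 1 \<le> 4*t*d"
    proof -
      have fb: "\<bar>real_of_int (\<lfloor>2*t*y$i\<rfloor> - \<lfloor>2*t*x$i\<rfloor>)\<bar> < \<bar>2*t*y$i - 2*t*x$i\<bar> + 1" for i
        by (rule floor_diff_bound)
      have fd: "\<bar>2*t*y$i - 2*t*x$i\<bar> \<le> 2*t*d" for i
      proof -
        have "\<bar>2*t*y$i - 2*t*x$i\<bar> = 2*t*\<bar>x$i - y$i\<bar>" using t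
          by (simp add: abs_mult right_diff_distrib[symmetric] abs_minus_commute)
        also have "\<dots> \<le> 2*t*d" using t comp_le_dist[of x i y] by (simp add: d_def)
        finally show ?thesis .
      qed
      have "\<bar>real_of_int (\<lfloor>2*t*y$i\<rfloor> - \<lfloor>2*t*x$i\<rfloor>)\<bar> + 1 \<le> 4*t*d" for i
        using td fb[of i] fd[of i] by linarith
      thus "real_of_int \<bar>fst (c y)\<bar> + 1 \<le> 4*t*d" "real_of_int \<bar>snd (c y)\<bar> + 1 \<le> 4*t*d"
        by (simp_all add: c_def cell_def)
    qed
    have pos: "0 < (real_of_int \<bar>fst (c y)\<bar> + 1)*(real_of_int \<bar>snd (c y)\<bar> + 1)" by (simp add: add_pos_nonneg)
    have "(real_of_int \<bar>fst (c y)\<bar> + 1)*(real_of_int \<bar>snd (c y)\<bar> + 1) \<le> (4*t*d)*(4*t*d)"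
      using comp t dpos by (intro mult_mono) auto
    hence le: "(real_of_int \<bar>fst (c y)\<bar> + 1)*(real_of_int \<bar>snd (c y)\<bar> + 1) \<le> 16*t^2*d^2"
      by (simp add: power2_eq_square algebra_simps)
    have "1/d^2 = 16*t^2 / (16*t^2*d^2)" using t dpos by simp
    also have "\<dots> \<le> 16*t^2 / ((real_of_int \<bar>fst (c y)\<bar> + 1)*(real_of_int \<bar>snd (c y)\<bar> + 1))"
      using t dpos pos by (intro divide_left_mono[OF le]) (simp_all add: mult_pos_pos)
    also have "\<dots> = 16*t^2 * w (c y)" by (simp add: w_def)
    finally show ?thesis by (simp add: d_def)
  qed
  have wnn: "w v \<ge> 0" for v by (simp add: w_def)
  have "(\<Sum>y\<in>P-{x}. 1/(dist x y)^2) \<le> (\<Sum>y\<in>P-{x}. 16*t^2 * w (c y))"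
    by (intro sum_mono pt)
  also have "\<dots> = 16*t^2 * (\<Sum>v\<in>c`(P-{x}). w v)"
    by (simp add: sum_distrib_left sum.reindex[OF injc])
  also have "(\<Sum>v\<in>c`(P-{x}). w v) \<le> (\<Sum>v\<in>{-H..H} \<times> {-H..H}. w v)"
    using box wnn by (intro sum_mono2) auto
  also have "(\<Sum>v\<in>{-H..H} \<times> {-H..H}. w v)
      = (\<Sum>a\<in>{-H..H}. 1/(real_of_int \<bar>a\<bar> + 1)) * (\<Sum>b\<in>{-H..H}. 1/(real_of_int \<bar>b\<bar> + 1))"
    by (simp add: sum_product sum.cartesian_product w_def split_def)
  finally show ?thesis using t by (simp add: H_def power2_eq_square mult_left_mono)
qed

lemma G_bound:
  assumes t: "t > 0" and fin: "finite P" and sq: "P \<subseteq> unit_square"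
    and sep: "\<forall>p\<in>P. \<forall>q\<in>P. p \<noteq> q \<longrightarrow> dist p q \<ge> 1/t"
  shows "(\<Sum>(x,y)\<in>{(x,y). x\<in>P \<and> y\<in>P \<and> x\<noteq>y}. 1/(dist x y)^2)
      \<le> real (card P) * (16*t^2*(1 + 2*ln (2*t+1))^2)"
proof -
  define B where "B = (\<Sum>a\<in>{-\<lfloor>2*t\<rfloor>..\<lfloor>2*t\<rfloor>}. 1/(real_of_int \<bar>a\<bar> + 1))"
  have "{(x,y). x\<in>P \<and> y\<in>P \<and> x\<noteq>y} = (SIGMA x:P. P - {x})" by auto
  hence "(\<Sum>(x,y)\<in>{(x,y). x\<in>P \<and> y\<in>P \<and> x\<noteq>y}. 1/(dist x y)^2) = (\<Sum>x\<in>P. \<Sum>y\<in>P-{x}. 1/(dist x y)^2)"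
    using fin by (simp add: sum.Sigma)
  also have "\<dots> \<le> (\<Sum>x\<in>P. 16*t^2*B^2)"
    using per_x[OF t fin sq sep] by (intro sum_mono) (simp add: B_def)
  also have "\<dots> = real (card P) * (16*t^2*B^2)" by simp
  also have "B \<le> 1 + 2*ln (2*t+1)"
  proof -
    define H where "H = nat \<lfloor>2*t\<rfloor>"
    have Hi: "int H = \<lfloor>2*t\<rfloor>" using t by (simp add: H_def)
    have b1: "B \<le> 1 + 2*ln (real H + 1)" using harm_int[of H] by (simp add: B_def Hi)
    have "real H \<le> 2*t" using t by (simp add: H_def)
    hence "ln (real H + 1) \<le> ln (2*t+1)" by simp
    thus ?thesis using b1 by simp
  qed
  hence "B^2 \<le> (1 + 2*ln (2*t+1))^2"
    by (intro power_mono) (auto simp: B_def intro!: sum_nonneg)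
  hence "real (card P) * (16*t^2*B^2) \<le> real (card P) * (16*t^2*(1 + 2*ln (2*t+1))^2)"
    by (intro mult_left_mono) auto
  finally show ?thesis .
qed

lemma Pi_card:
  assumes "finite P"
  shows "card (Pi_ab \<alpha> \<beta> P) = (\<Sum>p\<in>P. card {q\<in>P. p \<bullet> q = \<alpha>} * card {r\<in>P. p \<bullet> r = \<beta>})"
proof -
  have "Pi_ab \<alpha> \<beta> P = (SIGMA p:P. {q\<in>P. p \<bullet> q = \<alpha>} \<times> {r\<in>P. p \<bullet> r = \<beta>})"
    by (auto simp: Pi_ab_def)
  thus ?thesis using assms by (simp add: card_cartesian_product)
qed

lemma Pi_sq:
  assumes fin: "finite P" and al: "\<alpha> \<noteq> 0"
  shows "card (Pi_ab \<alpha> \<beta> P) \<le> 2 * card P ^ 2"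
proof -
  define cr where "cr q r = q$1*r$2 - q$2*r$1" for q r :: "real^2"
  define D1 where "D1 = {(p,q,r). (p,q,r) \<in> Pi_ab \<alpha> \<beta> P \<and> cr q r \<noteq> 0}"
  define D2 where "D2 = {(p,q,r). (p,q,r) \<in> Pi_ab \<alpha> \<beta> P \<and> cr q r = 0}"
  have fPi: "finite (Pi_ab \<alpha> \<beta> P)"
    by (rule finite_subset[of _ "P \<times> P \<times> P"]) (use fin in \<open>auto simp: Pi_ab_def\<close>)
  have U: "Pi_ab \<alpha> \<beta> P = D1 \<union> D2" by (auto simp: D1_def D2_def)
  have f1: "finite D1" "finite D2" using fPi U by (auto intro: finite_subset)
  have inj1: "inj_on (\<lambda>(p,q,r). (q,r)) D1"
  proof (rule inj_onI)
    fix x y assume a0: "x \<in> D1" "y \<in> D1" "(\<lambda>(p,q,r). (q,r)) x = (\<lambda>(p,q,r). (q,r)) y"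
    obtain p q r where x: "x = (p,q,r)" by (cases x) auto
    obtain p' q' r' where y: "y = (p',q',r')" by (cases y) auto
    have a: "(p,q,r) \<in> D1" "(p',q,r) \<in> D1" using a0 x y by auto
    define u1 where "u1 = p$1 - p'$1"
    define u2 where "u2 = p$2 - p'$2"
    have h1: "u1*q$1 + u2*q$2 = 0" "u1*r$1 + u2*r$2 = 0"
      using a by (auto simp: D1_def Pi_ab_def inner2 u1_def u2_def algebra_simps)
    have c: "cr q r \<noteq> 0" using a by (auto simp: D1_def)
    have "u1*(cr q r) = (u1*q$1 + u2*q$2)*r$2 - (u1*r$1 + u2*r$2)*q$2"
      by (simp add: cr_def algebra_simps)
    hence "u1 = 0" using h1 c by simp
    moreover have "u2*(cr q r) = (u1*r$1 + u2*r$2)*q$1 - (u1*q$1 + u2*q$2)*r$1"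
      by (simp add: cr_def algebra_simps)
    hence "u2 = 0" using h1 c by simp
    ultimately have "p = p'" by (simp add: vec2_eq u1_def u2_def)
    thus "x = y" using a0 x y by auto
  qed
  have inj2: "inj_on (\<lambda>(p,q,r). (p,q)) D2"
  proof (rule inj_onI)
    fix x y assume a0: "x \<in> D2" "y \<in> D2" "(\<lambda>(p,q,r). (p,q)) x = (\<lambda>(p,q,r). (p,q)) y"
    obtain p q r where x: "x = (p,q,r)" by (cases x) auto
    obtain p' q' r' where y: "y = (p',q',r')" by (cases y) auto
    have a: "(p,q,r) \<in> D2" "(p,q,r') \<in> D2" using a0 x y by auto
    have eq: "\<alpha>*(w$k) = \<beta>*(q$k)" if sv: "(p,q,w) \<in> D2" "k = 1 \<or> k = 2" for w k
    proof -
      have pq: "p$1*q$1 + p$2*q$2 = \<alpha>" "p$1*w$1 + p$2*w$2 = \<beta>" "cr q w = 0"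
        using sv by (auto simp: D2_def Pi_ab_def inner2)
      have "(p$1*q$1 + p$2*q$2)*w$1 - (p$1*w$1 + p$2*w$2)*q$1 = -(p$2)*cr q w"
        "(p$1*q$1 + p$2*q$2)*w$2 - (p$1*w$1 + p$2*w$2)*q$2 = p$1*cr q w"
        by (simp_all add: cr_def algebra_simps)
      thus ?thesis using pq sv(2) by auto
    qed
    have "\<alpha>*(r$i) = \<alpha>*(r'$i)" if "i = 1 \<or> i = 2" for i using eq[OF a(1) that] eq[OF a(2) that] by simp
    hence "r$i = r'$i" if "i = 1 \<or> i = 2" for i using al that by simp
    hence "r = r'" by (simp add: vec2_eq)
    thus "x = y" using a0 x y by auto
  qed
  have s1: "(\<lambda>(p,q,r). (q,r)) ` D1 \<subseteq> P \<times> P" by (auto simp: D1_def Pi_ab_def)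
  have s2: "(\<lambda>(p,q,r). (p,q)) ` D2 \<subseteq> P \<times> P" by (auto simp: D2_def Pi_ab_def)
  have "card D1 \<le> card (P \<times> P)"
    using card_image[OF inj1] card_mono[OF _ s1] fin by (metis finite_SigmaI)
  moreover have "card D2 \<le> card (P \<times> P)"
    using card_image[OF inj2] card_mono[OF _ s2] fin by (metis finite_SigmaI)
  moreover have "card (Pi_ab \<alpha> \<beta> P) \<le> card D1 + card D2" using U card_Un_le by metis
  ultimately show ?thesis by (simp add: card_cartesian_product power2_eq_square)
qed

lemma sq_le_cube:
  fixes a K :: real assumes "a \<ge> 0" "K > 0"
  shows "a^2 \<le> K^2 + a^3/K"
proof (cases "a \<le> K")
  case True
  hence "a^2 \<le> K^2" using assms by (intro power_mono) auto
  moreover have "a^3/K \<ge> 0" using assms by simp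
  ultimately show ?thesis by linarith
next
  case False
  hence "a^2 * K \<le> a^2 * a" using assms by (intro mult_left_mono) auto
  hence "a^2 \<le> a^3/K" using assms by (simp add: field_simps power2_eq_square power3_eq_cube)
  moreover have "K^2 \<ge> 0" by simp
  ultimately show ?thesis by linarith
qed

lemma prod_le:
  fixes a b K :: real assumes "a \<ge> 0" "b \<ge> 0" "K > 0"
  shows "a*b \<le> K^2 + (a^3 + b^3)/(2*K)"
proof -
  have "a*b \<le> (a^2 + b^2)/2" using sum_squares_ge_zero[of "a-b" 0]
    by (simp add: power2_eq_square algebra_simps)
  also have "\<dots> \<le> (K^2 + a^3/K + (K^2 + b^3/K))/2"
    using add_mono[OF sq_le_cube[OF assms(1,3)] sq_le_cube[OF assms(2,3)]] by (intro divide_right_mono) auto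
  also have "\<dots> = K^2 + (a^3 + b^3)/(2*K)" using assms by (simp add: field_simps)
  finally show ?thesis .
qed

lemma cube_sum_bound:
  fixes P :: "(real^2) set"
  assumes t: "t \<ge> 3" and fin: "finite P" and sq: "P \<subseteq> unit_square" and al: "\<alpha> \<noteq> 0"
    and sep: "\<forall>p\<in>P. \<forall>q\<in>P. p \<noteq> q \<longrightarrow> dist p q \<ge> 1/t"
  shows "(\<Sum>p\<in>P. real (card {q\<in>P. p \<bullet> q = \<alpha>})^3) \<le> 12545 * real (card P) * (t * ln t)^2"
proof -
  define L where "L = ln t"
  have t0: "t > 0" using t by simp
  have L1: "L \<ge> 1"
  proof -
    have "exp 1 \<le> t" using exp_le t by linarith
    hence "ln (exp 1) \<le> ln t" using t0 by (subst ln_le_cancel_iff) auto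
    thus ?thesis by (simp add: L_def)
  qed
  have l3: "ln 3 \<le> (2::real)" using ln_le_minus_one[of 3] by simp
  have "ln (2*t+1) \<le> ln (3*t)" using t by simp
  also have "\<dots> = ln 3 + L" using t0 by (simp add: ln_mult L_def)
  finally have lb: "ln (2*t+1) \<le> 2 + L" using l3 by linarith
  have lnn: "ln (2*t+1) \<ge> 0" using t by simp
  have B: "0 \<le> 1 + 2*ln (2*t+1)" "1 + 2*ln (2*t+1) \<le> 7*L" using lb lnn L1 by linarith+
  hence B2: "(1 + 2*ln (2*t+1))^2 \<le> (7*L)^2" by (intro power_mono) auto
  have G: "(\<Sum>(x,y)\<in>{(x,y). x\<in>P \<and> y\<in>P \<and> x\<noteq>y}. 1/(dist x y)^2)
      \<le> real (card P) * (16*t^2*(1 + 2*ln (2*t+1))^2)"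
    by (rule G_bound[OF t0 fin sq sep])
  also have "\<dots> \<le> real (card P) * (16*t^2*(7*L)^2)"
    using B2 by (intro mult_left_mono) auto
  finally have G': "(\<Sum>(x,y)\<in>{(x,y). x\<in>P \<and> y\<in>P \<and> x\<noteq>y}. 1/(dist x y)^2) \<le> real (card P) * (784*(t*L)^2)"
    by (simp add: power_mult_distrib)
  have tL: "(t*L)^2 \<ge> 1"
  proof -
    have "t*L \<ge> 1" using mult_mono[of 1 t 1 L] t L1 by simp
    thus ?thesis by (simp add: one_le_power)
  qed
  have "(\<Sum>p\<in>P. real (card {q\<in>P. p \<bullet> q = \<alpha>})^3)
     \<le> real (card P) + 16*(\<Sum>(x,y)\<in>{(x,y). x\<in>P \<and> y\<in>P \<and> x\<noteq>y}. 1/(dist x y)^2)"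
    by (rule sum_cubes[OF fin sq al])
  also have "\<dots> \<le> real (card P) + 16*(real (card P) * (784*(t*L)^2))" using G' by linarith
  also have "\<dots> \<le> 12545 * real (card P) * (t*L)^2"
  proof -
    have "real (card P) \<le> real (card P) * (t*L)^2" using tL by (simp add: mult_le_cancel_left1)
    thus ?thesis by simp
  qed
  finally show ?thesis by (simp add: L_def)
qed

theorem theorem2:
  fixes \<alpha> \<beta> :: real
  assumes "\<alpha> \<noteq> 0" and "\<beta> \<noteq> 0"
  shows "\<exists>C N. C > 0 \<and> N > 0 \<and>
    (\<forall>(n::nat) (\<epsilon>::real) (P::(real^2) set).
       real n > N \<longrightarrow> \<epsilon> > 0 \<longrightarrow> finite P \<longrightarrow> card P = n \<longrightarrow> P \<subseteq> unit_square \<longrightarrow>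
       (\<forall>p\<in>P. \<forall>q\<in>P. p \<noteq> q \<longrightarrow> dist p q \<ge> \<epsilon>) \<longrightarrow>
       real (card (Pi_ab \<alpha> \<beta> P)) \<le> C * real n powr (4/3) * (1/\<epsilon>) * ln (1/\<epsilon>))"
proof (rule exI[of _ "12546::real"], rule exI[of _ "100::real"], intro conjI allI impI)
  show "(12546::real) > 0" by simp
  show "(100::real) > 0" by simp
  fix n :: nat and \<epsilon> :: real and P :: "(real^2) set"
  assume n: "real n > 100" and e: "\<epsilon> > 0" and fin: "finite P" and cP: "card P = n"
    and sq: "P \<subseteq> unit_square" and sep0: "\<forall>p\<in>P. \<forall>q\<in>P. p \<noteq> q \<longrightarrow> dist p q \<ge> \<epsilon>"
  define t where "t = 1/\<epsilon>"
  have t0: "t > 0" using e by (simp add: t_def)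
  have et: "\<epsilon> = 1/t" using e by (simp add: t_def)
  have sep: "\<forall>p\<in>P. \<forall>q\<in>P. p \<noteq> q \<longrightarrow> dist p q \<ge> 1/t" using sep0 et by simp
  have "real n \<le> (2*t+1)^2" using card_bound[OF t0 fin sq sep] cP by simp
  hence "(10::real)^2 < (2*t+1)^2" using n by simp
  hence "10 < 2*t+1" using t0 by (smt (verit) power_mono)
  hence t3: "t \<ge> 3" by simp
  define L where "L = ln t"
  have L1: "L \<ge> 1"
  proof -
    have "exp 1 \<le> t" using exp_le t3 by linarith
    hence "ln (exp 1) \<le> ln t" using t0 by (subst ln_le_cancel_iff) auto
    thus ?thesis by (simp add: L_def)
  qed
  define X where "X = t*L"
  have X1: "X \<ge> 1" using mult_mono[of 1 t 1 L] t3 L1 by (simp add: X_def)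
  define s where "s = X powr (1/3)"
  have s0: "s > 0" using X1 by (simp add: s_def)
  have s3: "s^3 = X"
  proof -
    have "s^3 = s powr (real 3)" using s0 by (simp add: powr_realpow)
    also have "\<dots> = X" using X1 by (simp add: s_def powr_powr)
    finally show ?thesis .
  qed
  define K where "K = s^2"
  have K0: "K > 0" using s0 by (simp add: K_def)
  define A where "A p = real (card {q\<in>P. p \<bullet> q = \<alpha>})" for p
  define B where "B p = real (card {r\<in>P. p \<bullet> r = \<beta>})" for p
  have SA: "(\<Sum>p\<in>P. A p^3) \<le> 12545 * real n * X^2"
    using cube_sum_bound[OF t3 fin sq assms(1) sep] cP by (simp add: A_def X_def L_def)
  have SB: "(\<Sum>p\<in>P. B p^3) \<le> 12545 * real n * X^2"
    using cube_sum_bound[OF t3 fin sq assms(2) sep] cP by (simp add: B_def X_def L_def)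
  have "real (card (Pi_ab \<alpha> \<beta> P)) = (\<Sum>p\<in>P. A p * B p)"
    by (simp add: Pi_card[OF fin] A_def B_def)
  also have "\<dots> \<le> (\<Sum>p\<in>P. K^2 + (A p^3 + B p^3)/(2*K))"
    by (intro sum_mono prod_le) (auto simp: A_def B_def K0)
  also have "\<dots> = real n * K^2 + ((\<Sum>p\<in>P. A p^3) + (\<Sum>p\<in>P. B p^3))/(2*K)"
    using cP by (simp add: sum.distrib sum_divide_distrib[symmetric])
  also have "\<dots> \<le> real n * K^2 + (12545 * real n * X^2 + 12545 * real n * X^2)/(2*K)"
    using SA SB K0 by (intro add_left_mono divide_right_mono add_mono) auto
  also have "\<dots> = 12546 * real n * X * s"
  proof -
    have "K^2 = X * s" by (simp add: K_def s3[symmetric] power2_eq_square power3_eq_cube)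
    moreover have "X^2 / K = X * s" using s0
      by (simp add: K_def s3[symmetric] power2_eq_square power3_eq_cube field_simps)
    ultimately show ?thesis using K0 by (simp add: field_simps)
  qed
  finally have main: "real (card (Pi_ab \<alpha> \<beta> P)) \<le> 12546 * real n * X * s" .
  have n0: "real n > 0" using n by simp
  have p43: "real n powr (4/3) = real n * real n powr (1/3)"
  proof -
    have e43: "(4/3::real) = 1 + 1/3" by simp
    have "real n powr (4/3) = real n powr 1 * real n powr (1/3)" unfolding e43 by (rule powr_add)
    thus ?thesis using n0 by simp
  qed
  have goal_eq: "12546 * real n powr (4/3) * (1/\<epsilon>) * ln (1/\<epsilon>) = 12546 * (real n * real n powr (1/3)) * X"
    by (simp add: p43 X_def L_def t_def)
  show "real (card (Pi_ab \<alpha> \<beta> P)) \<le> 12546 * real n powr (4/3) * (1/\<epsilon>) * ln (1/\<epsilon>)"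
  proof (cases "X \<le> real n")
    case True
    have "s \<le> real n powr (1/3)" unfolding s_def using True X1 by (intro powr_mono2) auto
    hence "12546 * real n * X * s \<le> 12546 * real n * X * real n powr (1/3)"
      using X1 n0 by (intro mult_left_mono) auto
    thus ?thesis using main goal_eq by (simp add: algebra_simps)
  next
    case False
    have "real (card (Pi_ab \<alpha> \<beta> P)) \<le> 2 * real n * real n"
    proof -
      have "card (Pi_ab \<alpha> \<beta> P) \<le> 2 * n * n" using Pi_sq[OF fin assms(1), of \<beta>] cP by (simp add: power2_eq_square)
      hence "real (card (Pi_ab \<alpha> \<beta> P)) \<le> real (2 * n * n)" by (simp only: of_nat_le_iff)
      thus ?thesis by simp
    qed
    also have "\<dots> \<le> 2 * real n * X" using False n0 by simp
    also have "\<dots> \<le> 12546 * (real n * real n powr (1/3)) * X"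
    proof -
      have "1 \<le> real n powr (1/3)" using n by (simp add: ge_one_powr_ge_zero)
      hence "real n \<le> real n * real n powr (1/3)" using n0 by (simp add: mult_le_cancel_left1)
      thus ?thesis using X1 n0 by (smt (verit) mult_right_mono)
    qed
    finally show ?thesis using goal_eq by simp
  qed
qed

end
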